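(* Let $P_0(k)=C_{p0}T_{p0}^k-C_mT_m^k$ be a low pair function (so $C_{p0},C_m>0$ and $0<T_{p0}<T_m<1$), and let $C_{pi}>0$ and $0<T_{pi}<T_m$, $i=1,\dots,N$. Then there exist $j\in\{0,1,2\}$ and positive numbers $C_{m0},\dots,C_{mN}$ with $\sum_{i=0}^N C_{mi}=C_m$ such that the low pair functions $L_i(k)=C_{pi}T_{pi}^k-C_{mi}T_m^k$, $i=0,\dots,N$, all have their $j$-th derivatives vanishing at a common point (i.e. are synchronized at a common characteristic point), and $$P_0(k)+\sum_{i=1}^N C_{pi}T_{pi}^k=\sum_{i=0}^N L_i(k).$$
   Context: A low pair function is $C_pT_p^k-C_mT_m^k$ with $C_p,C_m>0$ and $0<T_p<T_m<1$, real variable $k$. Its characteristic points are the zeros of the function (abscissa intersection), of its first derivative (minimum) and of its second derivative (inflection point). *)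

theory Defs
  imports "HOL-Analysis.Analysis"
begin

definition low_pair :: "real \<Rightarrow> real \<Rightarrow> real \<Rightarrow> real \<Rightarrow> real \<Rightarrow> real" where
  "low_pair Cp Tp Cm Tm k = Cp * Tp powr k - Cm * Tm powr k"

definition is_low_pair :: "real \<Rightarrow> real \<Rightarrow> real \<Rightarrow> real \<Rightarrow> bool" where
  "is_low_pair Cp Tp Cm Tm \<longleftrightarrow> Cp > 0 \<and> Cm > 0 \<and> 0 < Tp \<and> Tp < Tm \<and> Tm < 1"

end

theory Submission
  imports Defs "HOL-Real_Asymp.Real_Asymp"
begin

lemma lim1: "0<r \<Longrightarrow> r<1 \<Longrightarrow> ((\<lambda>k::real. c * r powr k) \<longlongrightarrow> 0) at_top" by real_asymp
lemma lim2: "0<r \<Longrightarrow> r<1 \<Longrightarrow> c>0 \<Longrightarrow> filterlim (\<lambda>k::real. c * r powr k) at_top at_bot" by real_asymp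

theorem lemma5:
  fixes Cp Tp :: "nat \<Rightarrow> real" and Cm Tm :: real and N :: nat
  assumes P0: "is_low_pair (Cp 0) (Tp 0) Cm Tm"
    and others: "\<forall>i\<in>{1..N}. Cp i > 0 \<and> 0 < Tp i \<and> Tp i < Tm"
  shows "\<exists>j\<in>{0::nat, 1, 2}. \<exists>Cmi :: nat \<Rightarrow> real.
           (\<forall>i\<le>N. Cmi i > 0) \<and> (\<Sum>i\<le>N. Cmi i) = Cm \<and>
           (\<forall>i\<le>N. is_low_pair (Cp i) (Tp i) (Cmi i) Tm) \<and>
           (\<exists>k0::real. \<forall>i\<le>N. (deriv ^^ j) (low_pair (Cp i) (Tp i) (Cmi i) Tm) k0 = 0) \<and>
           (\<forall>k::real. low_pair (Cp 0) (Tp 0) Cm Tm k + (\<Sum>i=1..N. Cp i * Tp i powr k)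
                      = (\<Sum>i\<le>N. low_pair (Cp i) (Tp i) (Cmi i) Tm k))"
proof -
  have all: "\<And>i. i \<le> N \<Longrightarrow> Cp i > 0 \<and> 0 < Tp i \<and> Tp i < Tm"
  proof -
    fix i assume "i \<le> N"
    show "Cp i > 0 \<and> 0 < Tp i \<and> Tp i < Tm"
    proof (cases "i = 0")
      case True then show ?thesis using P0 unfolding is_low_pair_def by auto
    next
      case False then show ?thesis using others \<open>i \<le> N\<close> by auto
    qed
  qed
  have Tm: "0 < Tm" "Tm < 1" using P0 unfolding is_low_pair_def by auto
  have Cm: "Cm > 0" using P0 unfolding is_low_pair_def by auto
  define r where "r i = Tp i / Tm" for i
  have r: "\<And>i. i \<le> N \<Longrightarrow> 0 < r i \<and> r i < 1" using all Tm unfolding r_def by auto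
  define g where "g k = (\<Sum>i\<le>N. Cp i * r i powr k)" for k :: real
  have "(g \<longlongrightarrow> (\<Sum>i\<le>N. 0)) at_top"
    unfolding g_def by (rule tendsto_sum) (use r lim1 in auto)
  hence "(g \<longlongrightarrow> 0) at_top" by simp
  hence "eventually (\<lambda>k. g k < Cm) at_top" using Cm order_tendstoD(2) by blast
  then obtain b0 where b0: "\<And>k. k \<ge> b0 \<Longrightarrow> g k < Cm" by (auto simp: eventually_at_top_linorder)
  have "eventually (\<lambda>k. Cp 0 * r 0 powr k \<ge> Cm) at_bot"
    using lim2[of "r 0" "Cp 0"] r[of 0] all[of 0] by (simp add: filterlim_at_top)
  then obtain a0 where a0: "\<And>k. k \<le> a0 \<Longrightarrow> Cp 0 * r 0 powr k \<ge> Cm" by (auto simp: eventually_at_bot_linorder)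
  have gge: "g k \<ge> Cp 0 * r 0 powr k" for k
  proof -
    have "g k = Cp 0 * r 0 powr k + (\<Sum>i\<in>{..N}-{0}. Cp i * r i powr k)"
      unfolding g_def by (subst sum.remove[of _ 0]) auto
    moreover have "(\<Sum>i\<in>{..N}-{0}. Cp i * r i powr k) \<ge> 0"
    proof (intro sum_nonneg)
      fix i assume "i \<in> {..N}-{0}"
      then have "Cp i > 0" using all by auto
      then show "0 \<le> Cp i * r i powr k" by simp
    qed
    ultimately show ?thesis by linarith
  qed
  define a where "a = min a0 b0"
  have ga: "Cm \<le> g a" using a0[of a] gge[of a] unfolding a_def by auto
  have gb: "g b0 \<le> Cm" using b0[of b0] by auto
  have cont: "isCont g x" for x
    unfolding g_def using r by (intro continuous_intros) (use r in force)
  obtain k0 where k0: "g k0 = Cm"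
    using IVT2[of g b0 Cm a] ga gb cont unfolding a_def by auto
  define Cmi where "Cmi i = Cp i * r i powr k0" for i
  have Cmi_pos: "\<forall>i\<le>N. Cmi i > 0" using all r unfolding Cmi_def by (metis mult_pos_pos powr_gt_zero less_irrefl)
  have sumC: "(\<Sum>i\<le>N. Cmi i) = Cm" using k0 unfolding Cmi_def g_def by simp
  have lp: "\<forall>i\<le>N. is_low_pair (Cp i) (Tp i) (Cmi i) Tm"
    using all Cmi_pos Tm unfolding is_low_pair_def by auto
  have zero: "\<forall>i\<le>N. (deriv ^^ 0) (low_pair (Cp i) (Tp i) (Cmi i) Tm) k0 = 0"
  proof (intro allI impI)
    fix i assume "i \<le> N"
    have "r i powr k0 = Tp i powr k0 / Tm powr k0"
      unfolding r_def using all[OF \<open>i \<le> N\<close>] Tm by (simp add: powr_divide)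
    then show "(deriv ^^ 0) (low_pair (Cp i) (Tp i) (Cmi i) Tm) k0 = 0"
      unfolding low_pair_def Cmi_def using Tm by simp
  qed
  have eq: "\<forall>k::real. low_pair (Cp 0) (Tp 0) Cm Tm k + (\<Sum>i=1..N. Cp i * Tp i powr k)
                      = (\<Sum>i\<le>N. low_pair (Cp i) (Tp i) (Cmi i) Tm k)"
  proof
    fix k :: real
    have split: "(\<Sum>i\<le>N. Cp i * Tp i powr k) = Cp 0 * Tp 0 powr k + (\<Sum>i=1..N. Cp i * Tp i powr k)"
      by (simp add: atMost_atLeast0 sum.atLeast_Suc_atMost)
    have "(\<Sum>i\<le>N. low_pair (Cp i) (Tp i) (Cmi i) Tm k)
        = (\<Sum>i\<le>N. Cp i * Tp i powr k) - (\<Sum>i\<le>N. Cmi i) * Tm powr k"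
      unfolding low_pair_def by (simp add: sum_subtractf sum_distrib_right)
    then show "low_pair (Cp 0) (Tp 0) Cm Tm k + (\<Sum>i=1..N. Cp i * Tp i powr k)
                      = (\<Sum>i\<le>N. low_pair (Cp i) (Tp i) (Cmi i) Tm k)"
      using split sumC unfolding low_pair_def by simp
  qed
  show ?thesis
    by (rule bexI[of _ 0]) (use Cmi_pos sumC lp zero eq in blast, simp)
qed

end
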